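(* Fix $\alpha>0$ and $n\in\mathbb{N}$. For each $p\in\mathbb{N}$ consider the multivariate probit Indian buffet process (MVP-IBP) model with $p$ features, and let $n_i=\sum_{j=1}^p y_{ij}$ denote the number of features of object $i$. Then $\lim_{p\to\infty}E(n_i)=\alpha$ for each $i=1,\dots,n$. If moreover $\bm{\Sigma}=\bm{I}_p$ for every $p$, then $n_i$ converges in distribution to a Poisson$(\alpha)$ random variable as $p\to\infty$, for each $i=1,\dots,n$.
   Context: MVP-IBP model with $p$ features: for $i=1,\dots,n$ and $j=1,\dots,p$, $y_{ij}=\mathds{1}(z_{ij}>0)$, $z_{ij}=\beta_j+\varepsilon_{ij}$, where $\beta_1,\dots,\beta_p$ are i.i.d. $N(\mu_p,\tau_p^2)$, the vectors $\bm{\varepsilon}_i=(\varepsilon_{i1},\dots,\varepsilon_{ip})^\top$ are i.i.d. $N_p(\bm{0},\bm{\Sigma})$ across $i$ and independent of $\bm\beta$, with $\bm{\Sigma}=\bm\Sigma_p$ a $p\times p$ positive definite correlation matrix (unit diagonal), and the hyperparameters are $\tau_p=\sqrt{2\log p}$ and $\mu_p=\sqrt{1+\tau_p^2}\,\Phi^{-1}\!\left(\frac{\alpha}{\alpha+p}\right)$, where $\Phi$ is the standard normal CDF. *)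

theory Defs
  imports "HOL-Probability.Probability"
begin

definition normal_measure :: "real \<Rightarrow> real \<Rightarrow> real measure" where
  "normal_measure m v =
     (if v > 0 then density lborel (normal_density m (sqrt v)) else return borel m)"

definition Phi :: "real \<Rightarrow> real" where
  "Phi x = measure (normal_measure 0 1) {..x}"

definition Phi_inv :: "real \<Rightarrow> real" where
  "Phi_inv q = (THE x. Phi x = q)"

definition tau_p :: "nat \<Rightarrow> real" where
  "tau_p p = sqrt (2 * ln (real p))"

definition mu_p :: "real \<Rightarrow> nat \<Rightarrow> real" where
  "mu_p \<alpha> p = sqrt (1 + (tau_p p)\<^sup>2) * Phi_inv (\<alpha> / (\<alpha> + real p))"

definition corr_matrix :: "nat \<Rightarrow> (nat \<Rightarrow> nat \<Rightarrow> real) \<Rightarrow> bool" where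
  "corr_matrix p S \<longleftrightarrow>
     (\<forall>j<p. \<forall>k<p. S j k = S k j) \<and> (\<forall>j<p. S j j = 1) \<and>
     (\<forall>c::nat \<Rightarrow> real. (\<exists>j<p. c j \<noteq> 0) \<longrightarrow> (\<Sum>j<p. \<Sum>k<p. c j * S j k * c k) > 0)"

text \<open>The random vector (X 0, ..., X (p-1)) on M has law N_p(0, S):
  every linear combination is univariate normal with mean 0 and variance c^T S c.\<close>
definition mvn0 :: "'a measure \<Rightarrow> nat \<Rightarrow> (nat \<Rightarrow> nat \<Rightarrow> real) \<Rightarrow> (nat \<Rightarrow> 'a \<Rightarrow> real) \<Rightarrow> bool" where
  "mvn0 M p S X \<longleftrightarrow>
     (\<forall>j<p. X j \<in> borel_measurable M) \<and>
     (\<forall>c::nat \<Rightarrow> real. distr M borel (\<lambda>\<omega>. \<Sum>j<p. c j * X j \<omega>)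
                        = normal_measure 0 (\<Sum>j<p. \<Sum>k<p. c j * S j k * c k))"

definition mvp_ibp ::
  "'a measure \<Rightarrow> nat \<Rightarrow> real \<Rightarrow> nat \<Rightarrow> (nat \<Rightarrow> nat \<Rightarrow> real)
     \<Rightarrow> (nat \<Rightarrow> 'a \<Rightarrow> real) \<Rightarrow> (nat \<Rightarrow> nat \<Rightarrow> 'a \<Rightarrow> real) \<Rightarrow> bool" where
  "mvp_ibp M p \<alpha> n S \<beta> \<epsilon> \<longleftrightarrow>
     prob_space M \<and> corr_matrix p S \<and>
     (\<forall>j<p. \<beta> j \<in> borel_measurable M \<and>
            distr M borel (\<beta> j) = normal_measure (mu_p \<alpha> p) ((tau_p p)\<^sup>2)) \<and>
     prob_space.indep_vars M (\<lambda>_. borel) \<beta> {..<p} \<and>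
     (\<forall>i<n. mvn0 M p S (\<epsilon> i)) \<and>
     prob_space.indep_vars M (\<lambda>_. Pi\<^sub>M {..<p} (\<lambda>_. borel :: real measure))
       (\<lambda>k \<omega>. case k of None \<Rightarrow> (\<lambda>j\<in>{..<p}. \<beta> j \<omega>)
                     | Some i \<Rightarrow> (\<lambda>j\<in>{..<p}. \<epsilon> i j \<omega>))
       (insert None (Some ` {..<n}))"

text \<open>n_i = sum_j y_ij with y_ij = 1(z_ij > 0), z_ij = beta_j + eps_ij.\<close>
definition num_features :: "nat \<Rightarrow> (nat \<Rightarrow> 'a \<Rightarrow> real) \<Rightarrow> (nat \<Rightarrow> nat \<Rightarrow> 'a \<Rightarrow> real) \<Rightarrow> nat \<Rightarrow> 'a \<Rightarrow> real" where
  "num_features p \<beta> \<epsilon> i \<omega> = (\<Sum>j<p. if \<beta> j \<omega> + \<epsilon> i j \<omega> > 0 then 1 else 0)"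

end

theory Submission
  imports Defs "HOL-Real_Asymp.Real_Asymp"
begin


lemma normal_measure_affine:
  assumes "v > 0"
  shows "normal_measure m v = distr std_normal_distribution borel (\<lambda>x. m + sqrt v * x)"
proof -
  interpret std: prob_space std_normal_distribution
    using real_dist_normal_dist real_distribution_def by blast
  have "distributed std_normal_distribution lborel (\<lambda>x. x) (normal_density 0 1)"
    unfolding distributed_def
    by (auto simp: distr_id2 normal_density_nonneg)
  from std.normal_density_affine[OF this, of "sqrt v" m] assms
  have "distributed std_normal_distribution lborel (\<lambda>x. m + sqrt v * x) (normal_density m (sqrt v))"
    by simp
  then have "distr std_normal_distribution lborel (\<lambda>x. m + sqrt v * x) = density lborel (normal_density m (sqrt v))"
    unfolding distributed_def by simp
  moreover have "distr std_normal_distribution lborel (\<lambda>x. m + sqrt v * x) = distr std_normal_distribution borel (\<lambda>x. m + sqrt v * x)"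
    by (rule distr_cong) auto
  ultimately show ?thesis using assms unfolding normal_measure_def by simp
qed

lemma char_normal_measure:
  assumes "v \<ge> 0"
  shows "char (normal_measure m v) t = iexp (m * t) * complex_of_real (exp (- (v * t\<^sup>2) / 2))"
proof (cases "v = 0")
  case True
  then show ?thesis unfolding normal_measure_def char_def
    by (simp, subst integral_return) (auto simp: mult.commute)
next
  case False
  then have v: "v > 0" using assms by simp
  have "char (normal_measure m v) t = (CLINT x|std_normal_distribution. iexp (t * (m + sqrt v * x)))"
    unfolding normal_measure_affine[OF v] char_def
    by (subst integral_distr) auto
  also have "\<dots> = (CLINT x|std_normal_distribution. iexp (m * t) * iexp ((t * sqrt v) * x))"
    by (intro Bochner_Integration.integral_cong refl) (simp add: algebra_simps exp_add[symmetric])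
  also have "\<dots> = iexp (m * t) * char std_normal_distribution (t * sqrt v)"
    unfolding char_def by simp
  also have "\<dots> = iexp (m * t) * complex_of_real (exp (- (v * t\<^sup>2) / 2))"
    using v by (simp add: char_std_normal_distribution power_mult_distrib)
  finally show ?thesis .
qed

lemma real_distribution_normal_measure:
  assumes "v \<ge> 0"
  shows "real_distribution (normal_measure m v)"
proof (cases "v = 0")
  case True
  then show ?thesis unfolding normal_measure_def real_distribution_def real_distribution_axioms_def
    by (simp add: prob_space_return)
next
  case False
  then have v: "v > 0" using assms by simp
  interpret std: real_distribution std_normal_distribution by (rule real_dist_normal_dist)
  show ?thesis unfolding normal_measure_affine[OF v]
    unfolding real_distribution_def real_distribution_axioms_def
    by (auto intro!: std.prob_space_distr)
qed


lemma prob_space_density_real: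
  fixes h :: "'a \<Rightarrow> real"
  assumes "h \<in> borel_measurable P" "\<And>x. h x \<ge> 0" "integrable P h" "integral\<^sup>L P h = 1"
  shows "prob_space (density P (\<lambda>x. ennreal (h x)))"
proof (rule prob_spaceI)
  have "emeasure (density P (\<lambda>x. ennreal (h x))) (space (density P (\<lambda>x. ennreal (h x))))
      = (\<integral>\<^sup>+x. ennreal (h x) \<partial>P)"
    using assms by (subst emeasure_density) (auto intro!: nn_integral_cong)
  also have "\<dots> = ennreal (integral\<^sup>L P h)"
    using assms by (intro nn_integral_eq_integral) auto
  finally show "emeasure (density P (\<lambda>x. ennreal (h x))) (space (density P (\<lambda>x. ennreal (h x)))) = 1"
    using assms by simp
qed

lemma tilt:
  fixes X w :: "'a \<Rightarrow> real"
  assumes P: "prob_space P"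
    and X[measurable]: "X \<in> borel_measurable P" and w[measurable]: "w \<in> borel_measurable P"
    and wb: "\<And>x. \<bar>w x\<bar> \<le> 1"
    and law: "distr P borel X = \<mu>"
    and ch: "\<And>s. (CLINT x|P. complex_of_real (w x) * iexp (s * X x)) = char \<mu> s * complex_of_real (LINT x|P. w x)"
    and A[measurable]: "A \<in> sets borel"
  shows "(LINT x|P. indicator A (X x) * w x) = measure \<mu> A * (LINT x|P. w x)"
proof -
  interpret P: prob_space P by fact
  have intw: "integrable P w"
    by (rule P.integrable_const_bound[where B=1]) (use wb in auto)
  have iA: "integrable P (\<lambda>x. indicator A (X x) * w x)"
    by (rule P.integrable_const_bound[where B=1]) (use wb in \<open>auto simp: abs_mult indicator_def\<close>)
  have iA1: "integrable P (\<lambda>x. indicator A (X x) :: real)"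
    by (rule P.integrable_const_bound[where B=1]) auto
  define K where "K = 2 + (LINT x|P. w x)"
  have "\<bar>LINT x|P. w x\<bar> \<le> 1"
  proof -
    have "(LINT x|P. \<bar>w x\<bar>) \<le> (LINT x|P. 1)"
      using intw wb by (intro integral_mono) auto
    moreover have "\<bar>LINT x|P. w x\<bar> \<le> (LINT x|P. \<bar>w x\<bar>)"
      using integral_norm_bound[of P w] by simp
    moreover have "(LINT x|P. (1::real)) = 1" using P.prob_space by simp
    ultimately show ?thesis by linarith
  qed
  then have K1: "K \<ge> 1" unfolding K_def by linarith
  define h where "h x = (2 + w x) / K" for x
  have h_meas[measurable]: "h \<in> borel_measurable P" unfolding h_def by measurable
  have h_nn: "h x \<ge> 0" for x using wb[of x] K1 unfolding h_def by (smt (verit) divide_nonneg_pos)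
  have ih: "integrable P h" unfolding h_def using intw by auto
  have "integral\<^sup>L P h = (LINT x|P. 2 + w x) / K" unfolding h_def by simp
  also have "\<dots> = 1" using intw K1 unfolding K_def by (simp add: P.prob_space)
  finally have h1: "integral\<^sup>L P h = 1" .
  define Q where "Q = density P (\<lambda>x. ennreal (h x))"
  have Q: "prob_space Q" unfolding Q_def by (rule prob_space_density_real) (use h_nn ih h1 in auto)
  interpret Q: prob_space Q by fact
  have [measurable]: "X \<in> borel_measurable Q" unfolding Q_def by simp
  have rdQ: "real_distribution (distr Q borel X)"
    unfolding real_distribution_def real_distribution_axioms_def by (auto intro!: Q.prob_space_distr)
  have rdP: "real_distribution \<mu>"
    unfolding law[symmetric] real_distribution_def real_distribution_axioms_def by (auto intro!: P.prob_space_distr)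
  have charP: "(CLINT x|P. iexp (s * X x)) = char \<mu> s" for s
    unfolding law[symmetric] char_def by (subst integral_distr) auto
  have "char (distr Q borel X) s = char \<mu> s" for s
  proof -
    have "char (distr Q borel X) s = (CLINT x|Q. iexp (s * X x))"
      unfolding char_def by (subst integral_distr) auto
    also have "\<dots> = (CLINT x|P. h x *\<^sub>R iexp (s * X x))"
      unfolding Q_def by (rule integral_density) (use h_nn in auto)
    also have "\<dots> = (CLINT x|P. (2 / K) * iexp (s * X x) + (1 / K) * (complex_of_real (w x) * iexp (s * X x)))"
      by (intro Bochner_Integration.integral_cong refl)
         (simp add: h_def scaleR_conv_of_real add_divide_distrib algebra_simps)
    also have "\<dots> = (2 / K) * (CLINT x|P. iexp (s * X x)) + (1/K) * (CLINT x|P. complex_of_real (w x) * iexp (s * X x))"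
    proof -
      have i1: "integrable P (\<lambda>x. iexp (s * X x))" by (rule P.integrable_iexp) auto
      have i2: "integrable P (\<lambda>x. complex_of_real (w x) * iexp (s * X x))"
        by (rule P.integrable_const_bound[where B=1]) (use wb in \<open>auto simp: norm_mult\<close>)
      show ?thesis using i1 i2 by simp
    qed
    also have "\<dots> = char \<mu> s * ((2 + complex_of_real (LINT x|P. w x)) / K)"
      unfolding charP ch using K1 by (simp add: field_simps)
    also have "\<dots> = char \<mu> s"
    proof -
      have "2 + complex_of_real (LINT x|P. w x) = complex_of_real K" by (simp add: K_def)
      then show ?thesis using K1 by simp
    qed
    finally show ?thesis .
  qed
  then have "distr Q borel X = \<mu>"
    by (intro Levy_uniqueness rdQ rdP ext)
  then have Qlaw: "distr Q borel X = \<mu>" .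
  have "measure \<mu> A = (LINT x|distr Q borel X. indicator A x)" unfolding Qlaw[symmetric] by simp
  also have "\<dots> = (LINT x|Q. indicator A (X x))" by (rule integral_distr) auto
  also have "\<dots> = (LINT x|P. h x * indicator A (X x))"
    unfolding Q_def by (subst integral_density) (use h_nn in auto)
  also have "\<dots> = (LINT x|P. (2 / K) * indicator A (X x) + (1/K) * (indicator A (X x) * w x))"
    by (intro Bochner_Integration.integral_cong refl) (simp add: h_def add_divide_distrib algebra_simps)
  also have "\<dots> = (2/K) * (LINT x|P. indicator A (X x)) + (1/K) * (LINT x|P. indicator A (X x) * w x)"
    using iA iA1 by simp
  finally have e1: "measure \<mu> A = (2/K) * (LINT x|P. indicator A (X x)) + (1/K) * (LINT x|P. indicator A (X x) * w x)" .
  have e2: "(LINT x|P. indicator A (X x)) = measure \<mu> A"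
  proof -
    have "measure \<mu> A = (LINT x|distr P borel X. indicator A x)" unfolding law[symmetric] by simp
    also have "\<dots> = (LINT x|P. indicator A (X x))" by (rule integral_distr) auto
    finally show ?thesis by simp
  qed
  define I where "I = (LINT x|P. indicator A (X x) * w x)"
  have "K * measure \<mu> A = K * ((2/K) * measure \<mu> A + (1/K) * I)"
    using e1 e2 unfolding I_def by simp
  also have "\<dots> = 2 * measure \<mu> A + I" using K1 by (simp add: field_simps)
  finally have "K * measure \<mu> A = 2 * measure \<mu> A + I" .
  then show ?thesis unfolding I_def[symmetric] K_def by (simp add: algebra_simps)
qed


lemma cos_iexp: "complex_of_real (cos t) = (iexp t + iexp (- t)) / 2"
proof -
  have "iexp t = cis t" "iexp (-t) = cis (-t)" by (simp_all add: cis_conv_exp)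
  then show ?thesis by (simp add: complex_eq_iff)
qed

lemma sin_iexp: "complex_of_real (sin t) = (iexp t - iexp (- t)) / (2 * \<i>)"
proof -
  have "iexp t = cis t" "iexp (-t) = cis (-t)" by (simp_all add: cis_conv_exp)
  then show ?thesis by (simp add: complex_eq_iff)
qed

lemma indep_rect:
  fixes Y :: "nat \<Rightarrow> 'a \<Rightarrow> real" and \<mu> :: "nat \<Rightarrow> real measure"
  assumes "prob_space P" "\<forall>j<m. Y j \<in> borel_measurable P"
    "\<forall>j<m. real_distribution (\<mu> j)"
    "\<forall>c. (CLINT x|P. iexp (\<Sum>j<m. c j * Y j x)) = (\<Prod>j<m. char (\<mu> j) (c j))"
    "\<forall>j<m. B j \<in> sets borel"
  shows "measure P {x\<in>space P. \<forall>j<m. Y j x \<in> B j} = (\<Prod>j<m. measure (\<mu> j) (B j))"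
  using assms
proof (induction m arbitrary: P)
  case 0
  then interpret P: prob_space P by simp
  show ?case using P.prob_space by simp
next
  case (Suc m)
  interpret P: prob_space P by fact
  have Ym[measurable]: "Y j \<in> borel_measurable P" if "j < Suc m" for j using Suc.prems that by auto
  have Yms[measurable]: "Y j \<in> borel_measurable P" if "j < m" for j using Suc.prems that by auto
  have [measurable]: "B j \<in> sets borel" if "j < Suc m" for j using Suc.prems that by auto
  have rd: "real_distribution (\<mu> j)" if "j < Suc m" for j using Suc.prems that by auto
  define X where "X = Y m"
  define A where "A = B m"
  have X[measurable]: "X \<in> borel_measurable P" unfolding X_def by (rule Ym) simp
  have A[measurable]: "A \<in> sets borel" unfolding A_def using Suc.prems by auto
  define \<phi> where "\<phi> t = (\<Prod>j<m. char (\<mu> j) (t j))" for t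
  define \<theta> where "\<theta> t x = (\<Sum>j<m. t j * Y j x)" for t x
  have \<theta>m[measurable]: "\<theta> t \<in> borel_measurable P" for t unfolding \<theta>_def by measurable
  have key: "(CLINT x|P. iexp (s * X x + \<theta> t x)) = char (\<mu> m) s * \<phi> t" for s t
  proof -
    define c where "c = t(m := s)"
    have "(\<Sum>j<Suc m. c j * Y j x) = s * X x + \<theta> t x" for x
      unfolding c_def \<theta>_def X_def by (auto intro!: sum.cong)
    moreover have "(\<Prod>j<Suc m. char (\<mu> j) (c j)) = char (\<mu> m) s * \<phi> t"
      unfolding c_def \<phi>_def by (auto intro!: prod.cong)
    ultimately show ?thesis using Suc.prems(4) by (metis (no_types, lifting) ext)
  qed
  have \<theta>neg: "\<theta> (\<lambda>j. - t j) x = - \<theta> t x" for t x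
    unfolding \<theta>_def by (simp add: sum_negf)
  have \<phi>0: "\<phi> (\<lambda>j. 0) = 1" unfolding \<phi>_def
    using rd by (auto intro!: prod.neutral real_distribution.char_zero)
  have law: "distr P borel X = \<mu> m"
  proof (rule Levy_uniqueness)
    show "real_distribution (distr P borel X)"
      unfolding real_distribution_def real_distribution_axioms_def by (auto intro!: P.prob_space_distr)
    show "real_distribution (\<mu> m)" by (rule rd) simp
    show "char (distr P borel X) = char (\<mu> m)"
    proof
      fix s
      have "char (distr P borel X) s = (CLINT x|P. iexp (s * X x + \<theta> (\<lambda>j. 0) x))"
        unfolding char_def \<theta>_def by (subst integral_distr) auto
      then show "char (distr P borel X) s = char (\<mu> m) s" using key \<phi>0 by simp
    qed
  qed
  have intexp: "integrable P (\<lambda>x. iexp (f x))" if "f \<in> borel_measurable P" for f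
    by (rule P.integrable_iexp) (use that in auto)
  have meas_s: "(\<lambda>x. s * X x + \<theta> t x) \<in> borel_measurable P" for s t by measurable
  have cos_part: "(LINT x|P. indicator A (X x) * cos (\<theta> t x)) = measure (\<mu> m) A * (LINT x|P. cos (\<theta> t x))" for t
  proof (rule tilt[OF \<open>prob_space P\<close> X _ _ law _ A])
    show "(\<lambda>x. cos (\<theta> t x)) \<in> borel_measurable P" by measurable
    show "\<bar>cos (\<theta> t x)\<bar> \<le> 1" for x by simp
    have e: "complex_of_real (cos (\<theta> t x)) * iexp (s * X x)
       = (iexp (s * X x + \<theta> t x) + iexp (s * X x + \<theta> (\<lambda>j. - t j) x)) / 2" for x s
      unfolding cos_iexp \<theta>neg by (simp add: algebra_simps exp_add[symmetric] add_divide_distrib)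
    have 1: "(CLINT x|P. complex_of_real (cos (\<theta> t x)) * iexp (s * X x)) = char (\<mu> m) s * ((\<phi> t + \<phi> (\<lambda>j. - t j)) / 2)" for s
    proof -
      have "(CLINT x|P. complex_of_real (cos (\<theta> t x)) * iexp (s * X x))
          = ((CLINT x|P. iexp (s * X x + \<theta> t x)) + (CLINT x|P. iexp (s * X x + \<theta> (\<lambda>j. - t j) x))) / 2"
        unfolding e using intexp[OF meas_s] by simp
      also have "\<dots> = char (\<mu> m) s * ((\<phi> t + \<phi> (\<lambda>j. - t j)) / 2)"
        unfolding key by (simp add: algebra_simps add_divide_distrib)
      finally show ?thesis .
    qed
    have 2: "complex_of_real (LINT x|P. cos (\<theta> t x)) = (\<phi> t + \<phi> (\<lambda>j. - t j)) / 2"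
      using 1[of 0] rd[of m] by (simp add: real_distribution.char_zero)
    show "(CLINT x|P. complex_of_real (cos (\<theta> t x)) * iexp (s * X x)) = char (\<mu> m) s * complex_of_real (LINT x|P. cos (\<theta> t x))" for s
      unfolding 1 2 ..
  qed
  have sin_part: "(LINT x|P. indicator A (X x) * sin (\<theta> t x)) = measure (\<mu> m) A * (LINT x|P. sin (\<theta> t x))" for t
  proof (rule tilt[OF \<open>prob_space P\<close> X _ _ law _ A])
    show "(\<lambda>x. sin (\<theta> t x)) \<in> borel_measurable P" by measurable
    show "\<bar>sin (\<theta> t x)\<bar> \<le> 1" for x by simp
    have e: "complex_of_real (sin (\<theta> t x)) * iexp (s * X x)
       = (iexp (s * X x + \<theta> t x) - iexp (s * X x + \<theta> (\<lambda>j. - t j) x)) / (2 * \<i>)" for x s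
      unfolding sin_iexp \<theta>neg by (simp add: algebra_simps exp_add[symmetric] diff_divide_distrib)
    have 1: "(CLINT x|P. complex_of_real (sin (\<theta> t x)) * iexp (s * X x)) = char (\<mu> m) s * ((\<phi> t - \<phi> (\<lambda>j. - t j)) / (2 * \<i>))" for s
    proof -
      have "(CLINT x|P. complex_of_real (sin (\<theta> t x)) * iexp (s * X x))
          = ((CLINT x|P. iexp (s * X x + \<theta> t x)) - (CLINT x|P. iexp (s * X x + \<theta> (\<lambda>j. - t j) x))) / (2 * \<i>)"
        unfolding e using intexp[OF meas_s] by simp
      also have "\<dots> = char (\<mu> m) s * ((\<phi> t - \<phi> (\<lambda>j. - t j)) / (2 * \<i>))"
        unfolding key by (simp add: algebra_simps diff_divide_distrib)
      finally show ?thesis .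
    qed
    have 2: "complex_of_real (LINT x|P. sin (\<theta> t x)) = (\<phi> t - \<phi> (\<lambda>j. - t j)) / (2 * \<i>)"
      using 1[of 0] rd[of m] by (simp add: real_distribution.char_zero)
    show "(CLINT x|P. complex_of_real (sin (\<theta> t x)) * iexp (s * X x)) = char (\<mu> m) s * complex_of_real (LINT x|P. sin (\<theta> t x))" for s
      unfolding 1 2 ..
  qed
  have eul: "iexp a = complex_of_real (cos a) + \<i> * complex_of_real (sin a)" for a
  proof -
    have "iexp a = cis a" by (simp add: cis_conv_exp)
    then show ?thesis by (simp add: complex_eq_iff)
  qed
  have cond: "(CLINT x|P. complex_of_real (indicator A (X x)) * iexp (\<theta> t x)) = measure (\<mu> m) A * \<phi> t" for t
  proof -
    have i1: "integrable P (\<lambda>x. indicator A (X x) * cos (\<theta> t x))"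
      by (rule P.integrable_const_bound[where B=1]) (auto simp: abs_mult indicator_def)
    have i2: "integrable P (\<lambda>x. indicator A (X x) * sin (\<theta> t x))"
      by (rule P.integrable_const_bound[where B=1]) (auto simp: abs_mult indicator_def)
    have i3: "integrable P (\<lambda>x. cos (\<theta> t x))"
      by (rule P.integrable_const_bound[where B=1]) auto
    have i4: "integrable P (\<lambda>x. sin (\<theta> t x))"
      by (rule P.integrable_const_bound[where B=1]) auto
    have "(CLINT x|P. complex_of_real (indicator A (X x)) * iexp (\<theta> t x))
       = (CLINT x|P. complex_of_real (indicator A (X x) * cos (\<theta> t x)) + \<i> * complex_of_real (indicator A (X x) * sin (\<theta> t x)))"
      by (intro Bochner_Integration.integral_cong refl) (simp add: eul algebra_simps)
    also have "\<dots> = complex_of_real (LINT x|P. indicator A (X x) * cos (\<theta> t x)) + \<i> * complex_of_real (LINT x|P. indicator A (X x) * sin (\<theta> t x))"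
    proof -
      have j1: "integrable P (\<lambda>x. complex_of_real (indicator A (X x) * cos (\<theta> t x)))"
        using i1 by (rule integrable_of_real)
      have j2: "integrable P (\<lambda>x. \<i> * complex_of_real (indicator A (X x) * sin (\<theta> t x)))"
        using i2 by (intro integrable_mult_right integrable_of_real)
      show ?thesis
        by (simp only: Bochner_Integration.integral_add[OF j1 j2] integral_mult_right_zero integral_complex_of_real)
    qed
    also have "\<dots> = measure (\<mu> m) A * (complex_of_real (LINT x|P. cos (\<theta> t x)) + \<i> * complex_of_real (LINT x|P. sin (\<theta> t x)))"
      unfolding cos_part sin_part by (simp add: algebra_simps)
    also have "complex_of_real (LINT x|P. cos (\<theta> t x)) + \<i> * complex_of_real (LINT x|P. sin (\<theta> t x))
        = (CLINT x|P. iexp (\<theta> t x))"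
    proof -
      have "(CLINT x|P. iexp (\<theta> t x)) = (CLINT x|P. complex_of_real (cos (\<theta> t x)) + \<i> * complex_of_real (sin (\<theta> t x)))"
        by (intro Bochner_Integration.integral_cong refl) (simp add: eul)
      also have "\<dots> = complex_of_real (LINT x|P. cos (\<theta> t x)) + \<i> * complex_of_real (LINT x|P. sin (\<theta> t x))"
        using i3 i4 by simp
      finally show ?thesis by simp
    qed
    also have "(CLINT x|P. iexp (\<theta> t x)) = \<phi> t"
      using key[of 0 t] rd[of m] by (simp add: real_distribution.char_zero)
    finally show ?thesis .
  qed
  define S where "S = {x\<in>space P. \<forall>j<m. Y j x \<in> B j}"
  define T where "T = {x\<in>space P. \<forall>j<Suc m. Y j x \<in> B j}"
  have T_eq: "T = {x\<in>space P. X x \<in> A} \<inter> S"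
    unfolding T_def S_def X_def A_def using less_Suc_eq by auto
  have S_sets[measurable]: "S \<in> sets P" unfolding S_def by measurable
  have T_sets[measurable]: "T \<in> sets P" unfolding T_def by measurable
  have pA: "measure P {x\<in>space P. X x \<in> A} = measure (\<mu> m) A"
    unfolding law[symmetric] by (simp add: measure_distr vimage_def Int_def conj_commute)
  have prod_eq: "(\<Prod>j<Suc m. measure (\<mu> j) (B j)) = measure (\<mu> m) A * (\<Prod>j<m. measure (\<mu> j) (B j))"
    unfolding A_def by simp
  show ?case
  proof (cases "measure (\<mu> m) A = 0")
    case True
    have "measure P T \<le> measure P {x\<in>space P. X x \<in> A}"
      unfolding T_eq by (intro P.finite_measure_mono) auto
    then have "measure P T = 0" using True pA by (simp add: measure_nonneg antisym)
    then show ?thesis using True prod_eq unfolding T_def by simp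
  next
    case False
    then have pApos: "measure (\<mu> m) A > 0" using measure_nonneg[of "\<mu> m" A] by linarith
    define g where "g x = indicator A (X x) / measure (\<mu> m) A" for x
    have g_meas[measurable]: "g \<in> borel_measurable P" unfolding g_def by measurable
    have g_nn: "g x \<ge> 0" for x unfolding g_def using pApos by simp
    have intA: "integrable P (\<lambda>x. indicator A (X x) :: real)"
      by (rule P.integrable_const_bound[where B=1]) auto
    have eA: "(LINT x|P. indicator A (X x)) = measure (\<mu> m) A"
    proof -
      have "measure (\<mu> m) A = (LINT x|distr P borel X. indicator A x)" unfolding law[symmetric] by simp
      also have "\<dots> = (LINT x|P. indicator A (X x))" by (rule integral_distr) auto
      finally show ?thesis by simp
    qed
    define Q where "Q = density P (\<lambda>x. ennreal (g x))"
    have Q: "prob_space Q" unfolding Q_def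
      by (rule prob_space_density_real) (use g_nn intA eA pApos in \<open>auto simp: g_def\<close>)
    have sQ: "sets Q = sets P" "space Q = space P" unfolding Q_def by auto
    have IH: "measure Q {x\<in>space Q. \<forall>j<m. Y j x \<in> B j} = (\<Prod>j<m. measure (\<mu> j) (B j))"
    proof (rule Suc.IH[OF Q])
      show "\<forall>j<m. Y j \<in> borel_measurable Q" unfolding Q_def by simp
      show "\<forall>j<m. real_distribution (\<mu> j)" using rd by simp
      show "\<forall>j<m. B j \<in> sets borel" using Suc.prems by simp
      show "\<forall>c. (CLINT x|Q. iexp (\<Sum>j<m. c j * Y j x)) = (\<Prod>j<m. char (\<mu> j) (c j))"
      proof
        fix c
        have "(CLINT x|Q. iexp (\<Sum>j<m. c j * Y j x)) = (CLINT x|P. g x *\<^sub>R iexp (\<theta> c x))"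
          unfolding Q_def \<theta>_def by (rule integral_density) (use g_nn in auto)
        also have "\<dots> = (CLINT x|P. (1 / measure (\<mu> m) A) * (complex_of_real (indicator A (X x)) * iexp (\<theta> c x)))"
          by (intro Bochner_Integration.integral_cong refl) (simp add: g_def scaleR_conv_of_real)
        also have "\<dots> = (1 / measure (\<mu> m) A) * (measure (\<mu> m) A * \<phi> c)"
          unfolding cond[symmetric] by simp
        also have "\<dots> = \<phi> c" using pApos by simp
        finally show "(CLINT x|Q. iexp (\<Sum>j<m. c j * Y j x)) = (\<Prod>j<m. char (\<mu> j) (c j))"
          unfolding \<phi>_def .
      qed
    qed
    have "measure Q S = (LINT x|Q. indicator S x)" using sQ by (simp add: Int_absorb2 sets.sets_into_space)
    also have "\<dots> = (LINT x|P. g x * indicator S x)"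
      unfolding Q_def by (subst integral_density) (use g_nn in auto)
    also have "\<dots> = (LINT x|P. indicator T x / measure (\<mu> m) A)"
      by (intro Bochner_Integration.integral_cong refl) (auto simp: g_def T_eq indicator_def)
    also have "\<dots> = measure P T / measure (\<mu> m) A"
      by (simp add: Int_absorb2 sets.sets_into_space)
    finally have "measure P T = measure (\<mu> m) A * measure Q S" using pApos by (simp add: field_simps)
    also have "measure Q S = (\<Prod>j<m. measure (\<mu> j) (B j))" using IH unfolding S_def sQ .
    finally show ?thesis unfolding T_def prod_eq .
  qed
qed


lemma normal_measure_std: "normal_measure 0 1 = std_normal_distribution"
  unfolding normal_measure_def by simp

lemma Phi_cdf: "Phi = cdf std_normal_distribution"
  unfolding Phi_def cdf_def normal_measure_std by (rule ext) simp

lemma std_null: "S \<in> null_sets lborel \<Longrightarrow> S \<in> null_sets std_normal_distribution"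
  by (subst null_sets_density_iff) (auto elim!: AE_mp[OF AE_not_in])

lemma std_singleton: "measure std_normal_distribution {x} = 0"
proof -
  have n: "{x} \<in> null_sets lborel" by (auto simp: null_sets_def)
  show ?thesis using std_null[OF n] by (simp add: measure_def null_setsD1)
qed

lemma Phi_cont: "isCont Phi x"
proof -
  interpret real_distribution std_normal_distribution by (rule real_dist_normal_dist)
  show ?thesis unfolding Phi_cdf isCont_cdf by (rule std_singleton)
qed

lemma std_interval_pos:
  assumes "a < b" shows "measure std_normal_distribution {a<..b} > 0"
proof -
  interpret real_distribution std_normal_distribution by (rule real_dist_normal_dist)
  have "{a<..b} \<notin> null_sets std_normal_distribution"
  proof
    assume "{a<..b} \<in> null_sets std_normal_distribution"
    then have "AE x in lborel. x \<in> {a<..b} \<longrightarrow> std_normal_density x = 0"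
      by (subst (asm) null_sets_density_iff) auto
    then have "AE x in lborel. x \<notin> {a<..b}"
      by (rule AE_mp) (auto intro!: AE_I2 simp: normal_density_def)
    then have "emeasure lborel {a<..b} = 0"
      by (subst (asm) AE_iff_measurable[of "{a<..b}"]) auto
    then show False using assms by simp
  qed
  then show ?thesis
    by (metis emeasure_eq_measure measure_nonneg not_less_iff_gr_or_eq null_setsI sets_lborel atLeastAtMost_borel greaterThanAtMost_borel sets_density ennreal_0 zero_less_measure_iff)
qed

lemma Phi_strict: "a < b \<Longrightarrow> Phi a < Phi b"
proof -
  assume ab: "a < b"
  interpret real_distribution std_normal_distribution by (rule real_dist_normal_dist)
  have "Phi b - Phi a = measure std_normal_distribution {a<..b}"
    unfolding Phi_cdf using cdf_diff_eq[OF ab] by simp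
  then show ?thesis using std_interval_pos[OF ab] by simp
qed

lemma Phi_inv:
  assumes "0 < q" "q < 1" shows "Phi (Phi_inv q) = q"
proof -
  interpret real_distribution std_normal_distribution by (rule real_dist_normal_dist)
  have lb: "(Phi \<longlongrightarrow> 0) at_bot" unfolding Phi_cdf by (rule cdf_lim_at_bot)
  have lt: "(Phi \<longlongrightarrow> 1) at_top" unfolding Phi_cdf by (rule cdf_lim_at_top_prob)
  from order_tendstoD(2)[OF lb assms(1)] obtain x1 where x1: "\<And>x. x \<le> x1 \<Longrightarrow> Phi x < q"
    by (auto simp: eventually_at_bot_linorder)
  from order_tendstoD(1)[OF lt assms(2)] obtain x2 where x2: "\<And>x. x \<ge> x2 \<Longrightarrow> Phi x > q"
    by (auto simp: eventually_at_top_linorder)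
  let ?a = "min x1 x2" and ?b = "max x1 x2"
  have "\<exists>x. ?a \<le> x \<and> x \<le> ?b \<and> Phi x = q"
    by (rule IVT) (use x1[of ?a] x2[of ?b] Phi_cont in auto)
  then obtain x where x: "Phi x = q" by blast
  have "Phi_inv q = x"
    unfolding Phi_inv_def
  proof (rule the_equality)
    show "Phi x = q" by fact
    fix y assume "Phi y = q"
    then show "y = x" using Phi_strict[of x y] Phi_strict[of y x] x by (cases x y rule: linorder_cases) auto
  qed
  then show ?thesis using x by simp
qed

lemma std_sym: "distr std_normal_distribution borel uminus = std_normal_distribution"
proof (rule Levy_uniqueness)
  interpret std: real_distribution std_normal_distribution by (rule real_dist_normal_dist)
  show "real_distribution (distr std_normal_distribution borel uminus)"
    unfolding real_distribution_def real_distribution_axioms_def by (auto intro!: std.prob_space_distr)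
  show "real_distribution std_normal_distribution" by (rule real_dist_normal_dist)
  show "char (distr std_normal_distribution borel uminus) = char std_normal_distribution"
  proof
    fix t
    have "char (distr std_normal_distribution borel uminus) t = (CLINT x|std_normal_distribution. iexp ((- t) * x))"
      unfolding char_def by (subst integral_distr) auto
    also have "\<dots> = char std_normal_distribution (- t)" unfolding char_def ..
    finally show "char (distr std_normal_distribution borel uminus) t = char std_normal_distribution t"
      by (simp add: char_std_normal_distribution)
  qed
qed

lemma normal_pos_prob:
  assumes "v > 0"
  shows "measure (normal_measure m v) {0<..} = Phi (m / sqrt v)"
proof -
  interpret std: real_distribution std_normal_distribution by (rule real_dist_normal_dist)
  let ?a = "m / sqrt v"
  have "measure (normal_measure m v) {0<..} = measure std_normal_distribution ((\<lambda>x. m + sqrt v * x) -` {0<..})"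
    unfolding normal_measure_affine[OF assms] by (subst measure_distr) auto
  also have "(\<lambda>x. m + sqrt v * x) -` {0<..} = uminus -` {..<?a}"
    using assms by (auto simp: field_simps)
  also have "measure std_normal_distribution (uminus -` {..<?a}) = measure (distr std_normal_distribution borel uminus) {..<?a}"
    by (subst measure_distr) auto
  also have "\<dots> = measure std_normal_distribution {..<?a}" unfolding std_sym ..
  also have "\<dots> = measure std_normal_distribution ({..?a} - {?a})"
    by (rule arg_cong[where f="measure _"]) auto
  also have "\<dots> = measure std_normal_distribution {..?a} - measure std_normal_distribution {?a}"
    by (rule std.finite_measure_Diff) auto
  also have "\<dots> = Phi ?a" unfolding std_singleton Phi_cdf cdf_def by simp
  finally show ?thesis .
qed


lemma cSc_nonneg:
  assumes "corr_matrix p S"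
  shows "(\<Sum>j<p. \<Sum>k<p. c j * S j k * c k) \<ge> 0"
proof (cases "\<exists>j<p. c j \<noteq> 0")
  case True then show ?thesis using assms unfolding corr_matrix_def by (simp add: less_imp_le)
next
  case False then show ?thesis by simp
qed

lemma model_char:
  assumes m: "mvp_ibp P p \<alpha> n S \<beta> \<epsilon>" and i: "i < n"
  shows "(CLINT x|P. iexp (\<Sum>j<p. c j * (\<beta> j x + \<epsilon> i j x)))
       = (\<Prod>j<p. char (normal_measure (mu_p \<alpha> p) ((tau_p p)\<^sup>2)) (c j))
         * complex_of_real (exp (- (\<Sum>j<p. \<Sum>k<p. c j * S j k * c k) / 2))"
proof -
  from m have P: "prob_space P" and cm: "corr_matrix p S"
    and bl: "\<And>j. j < p \<Longrightarrow> \<beta> j \<in> borel_measurable P \<and> distr P borel (\<beta> j) = normal_measure (mu_p \<alpha> p) ((tau_p p)\<^sup>2)"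
    and bi: "prob_space.indep_vars P (\<lambda>_. borel) \<beta> {..<p}"
    and mv: "mvn0 P p S (\<epsilon> i)"
    and ind: "prob_space.indep_vars P (\<lambda>_. Pi\<^sub>M {..<p} (\<lambda>_. borel :: real measure))
       (\<lambda>k \<omega>. case k of None \<Rightarrow> (\<lambda>j\<in>{..<p}. \<beta> j \<omega>)
                     | Some i \<Rightarrow> (\<lambda>j\<in>{..<p}. \<epsilon> i j \<omega>))
       (insert None (Some ` {..<n}))"
    unfolding mvp_ibp_def using i by auto
  interpret P: prob_space P by fact
  have bm[measurable]: "\<beta> j \<in> borel_measurable P" if "j < p" for j using bl[OF that] by simp
  have em[measurable]: "\<epsilon> i j \<in> borel_measurable P" if "j < p" for j using mv that unfolding mvn0_def by simp
  define U where "U x = (\<Sum>j<p. c j * \<beta> j x)" for x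
  define V where "V x = (\<Sum>j<p. c j * \<epsilon> i j x)" for x
  have Um[measurable]: "U \<in> borel_measurable P" unfolding U_def by measurable
  have Vm[measurable]: "V \<in> borel_measurable P" unfolding V_def by measurable
  define G where "G k v = iexp (\<Sum>j<p. c j * v j)" for k :: "nat option" and v :: "nat \<Rightarrow> real"
  have Gm: "G k \<in> borel_measurable (Pi\<^sub>M {..<p} (\<lambda>_. borel))" for k
    unfolding G_def by measurable
  define F where "F = (\<lambda>k \<omega>. case k of None \<Rightarrow> (\<lambda>j\<in>{..<p}. \<beta> j \<omega>)
                     | Some i \<Rightarrow> (\<lambda>j\<in>{..<p}. \<epsilon> i j \<omega>))"
  have ind2: "P.indep_vars (\<lambda>_. borel) (\<lambda>k \<omega>. G k (F k \<omega>)) {None, Some i}"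
    by (rule P.indep_vars_subset[OF P.indep_vars_compose2[OF ind[folded F_def] Gm]]) (use i in auto)
  have GU: "G None (F None x) = iexp (U x)" for x
    unfolding G_def F_def U_def by (auto intro!: arg_cong[where f=iexp] sum.cong)
  have GV: "G (Some i) (F (Some i) x) = iexp (V x)" for x
    unfolding G_def F_def V_def by (auto intro!: arg_cong[where f=iexp] sum.cong)
  have "(CLINT x|P. iexp (\<Sum>j<p. c j * (\<beta> j x + \<epsilon> i j x))) = (CLINT x|P. (\<Prod>k\<in>{None, Some i}. G k (F k x)))"
  proof (intro Bochner_Integration.integral_cong refl)
    fix x
    have "(\<Prod>k\<in>{None, Some i}. G k (F k x)) = iexp (U x) * iexp (V x)" by (simp add: GU GV)
    also have "\<dots> = iexp (\<Sum>j<p. c j * (\<beta> j x + \<epsilon> i j x))"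
      unfolding U_def V_def by (simp add: distrib_left sum.distrib exp_add[symmetric] algebra_simps)
    finally show "iexp (\<Sum>j<p. c j * (\<beta> j x + \<epsilon> i j x)) = (\<Prod>k\<in>{None, Some i}. G k (F k x))" ..
  qed
  also have "\<dots> = (\<Prod>k\<in>{None, Some i}. (CLINT x|P. G k (F k x)))"
    by (rule P.indep_vars_lebesgue_integral[OF _ ind2])
       (auto simp: GU GV intro!: P.integrable_iexp)
  also have "\<dots> = (CLINT x|P. iexp (U x)) * (CLINT x|P. iexp (V x))"
    by (simp add: GU GV)
  also have "(CLINT x|P. iexp (U x)) = (\<Prod>j<p. char (normal_measure (mu_p \<alpha> p) ((tau_p p)\<^sup>2)) (c j))"
  proof -
    have ind3: "P.indep_vars (\<lambda>_. borel) (\<lambda>j x. iexp (c j * \<beta> j x)) {..<p}"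
      by (rule P.indep_vars_compose2[OF bi]) measurable
    have "(CLINT x|P. iexp (U x)) = (CLINT x|P. (\<Prod>j<p. iexp (c j * \<beta> j x)))"
      unfolding U_def by (simp add: exp_sum[symmetric] sum_distrib_left)
    also have "\<dots> = (\<Prod>j<p. (CLINT x|P. iexp (c j * \<beta> j x)))"
      by (rule P.indep_vars_lebesgue_integral[OF _ ind3]) (auto intro!: P.integrable_iexp)
    also have "\<dots> = (\<Prod>j<p. char (normal_measure (mu_p \<alpha> p) ((tau_p p)\<^sup>2)) (c j))"
    proof (rule prod.cong[OF refl])
      fix j assume j: "j \<in> {..<p}"
      have "char (normal_measure (mu_p \<alpha> p) ((tau_p p)\<^sup>2)) (c j) = char (distr P borel (\<beta> j)) (c j)"
        using bl[of j] j by simp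
      also have "\<dots> = (CLINT x|P. iexp (c j * \<beta> j x))"
        unfolding char_def using j by (subst integral_distr) auto
      finally show "(CLINT x|P. iexp (c j * \<beta> j x)) = char (normal_measure (mu_p \<alpha> p) ((tau_p p)\<^sup>2)) (c j)" ..
    qed
    finally show ?thesis .
  qed
  also have "(CLINT x|P. iexp (V x)) = complex_of_real (exp (- (\<Sum>j<p. \<Sum>k<p. c j * S j k * c k) / 2))"
  proof -
    have "(CLINT x|P. iexp (V x)) = char (distr P borel V) 1"
      unfolding char_def by (subst integral_distr) auto
    also have "distr P borel V = normal_measure 0 (\<Sum>j<p. \<Sum>k<p. c j * S j k * c k)"
      using mv unfolding mvn0_def V_def by blast
    also have "char \<dots> 1 = complex_of_real (exp (- (\<Sum>j<p. \<Sum>k<p. c j * S j k * c k) / 2))"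
      using cSc_nonneg[OF cm, of c] by (subst char_normal_measure) auto
    finally show ?thesis .
  qed
  finally show ?thesis .
qed


lemma law_Z:
  assumes m: "mvp_ibp P p \<alpha> n S \<beta> \<epsilon>" and i: "i < n" and j: "j < p"
  shows "distr P borel (\<lambda>x. \<beta> j x + \<epsilon> i j x) = normal_measure (mu_p \<alpha> p) ((tau_p p)\<^sup>2 + 1)"
proof (rule Levy_uniqueness)
  from m have P: "prob_space P" and cm: "corr_matrix p S" and mv: "mvn0 P p S (\<epsilon> i)"
    and bl: "\<And>j. j < p \<Longrightarrow> \<beta> j \<in> borel_measurable P"
    unfolding mvp_ibp_def using i by auto
  interpret P: prob_space P by fact
  have [measurable]: "\<beta> j \<in> borel_measurable P" using bl j by simp
  have [measurable]: "\<epsilon> i j \<in> borel_measurable P" using mv j unfolding mvn0_def by simp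
  show "real_distribution (distr P borel (\<lambda>x. \<beta> j x + \<epsilon> i j x))"
    unfolding real_distribution_def real_distribution_axioms_def by (auto intro!: P.prob_space_distr)
  show "real_distribution (normal_measure (mu_p \<alpha> p) ((tau_p p)\<^sup>2 + 1))"
    by (rule real_distribution_normal_measure) simp
  show "char (distr P borel (\<lambda>x. \<beta> j x + \<epsilon> i j x)) = char (normal_measure (mu_p \<alpha> p) ((tau_p p)\<^sup>2 + 1))"
  proof
    fix t
    have ifz1: "(if b then (t::real) else 0) * x = (if b then t * x else 0)" for b x by simp
    have ifz2: "x * (if b then (t::real) else 0) = (if b then x * t else 0)" for b x by simp
    have ifz3: "(if b then (y::real) else 0) * x = (if b then y * x else 0)" for b x y by simp
    define c :: "nat \<Rightarrow> real" where "c k = (if k = j then t else 0)" for k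
    have S1: "S j j = 1" using cm j unfolding corr_matrix_def by simp
    have s1: "(\<Sum>k<p. c k * (\<beta> k x + \<epsilon> i k x)) = t * (\<beta> j x + \<epsilon> i j x)" for x
      unfolding c_def using j by (simp add: ifz1 sum.delta)
    have s2: "(\<Sum>k<p. \<Sum>l<p. c k * S k l * c l) = t\<^sup>2"
      unfolding c_def using j S1 by (simp add: ifz1 ifz2 ifz3 sum.delta power2_eq_square)
    have rd: "real_distribution (normal_measure (mu_p \<alpha> p) ((tau_p p)\<^sup>2))"
      by (rule real_distribution_normal_measure) simp
    have s3: "(\<Prod>k<p. char (normal_measure (mu_p \<alpha> p) ((tau_p p)\<^sup>2)) (c k)) = char (normal_measure (mu_p \<alpha> p) ((tau_p p)\<^sup>2)) t"
    proof -
      have "(\<Prod>k<p. char (normal_measure (mu_p \<alpha> p) ((tau_p p)\<^sup>2)) (c k)) = (\<Prod>k<p. if k = j then char (normal_measure (mu_p \<alpha> p) ((tau_p p)\<^sup>2)) t else 1)"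
        unfolding c_def by (intro prod.cong refl) (auto simp: real_distribution.char_zero[OF rd])
      also have "\<dots> = char (normal_measure (mu_p \<alpha> p) ((tau_p p)\<^sup>2)) t" using j by (simp add: prod.delta)
      finally show ?thesis .
    qed
    have "char (distr P borel (\<lambda>x. \<beta> j x + \<epsilon> i j x)) t = (CLINT x|P. iexp (\<Sum>k<p. c k * (\<beta> k x + \<epsilon> i k x)))"
      unfolding char_def s1 by (subst integral_distr) auto
    also have "\<dots> = char (normal_measure (mu_p \<alpha> p) ((tau_p p)\<^sup>2)) t * complex_of_real (exp (- t\<^sup>2 / 2))"
      unfolding model_char[OF m i] s2 s3 ..
    also have "\<dots> = char (normal_measure (mu_p \<alpha> p) ((tau_p p)\<^sup>2 + 1)) t"
      by (simp add: char_normal_measure algebra_simps exp_add[symmetric] diff_divide_distrib add_divide_distrib flip: exp_of_real)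
    finally show "char (distr P borel (\<lambda>x. \<beta> j x + \<epsilon> i j x)) t = char (normal_measure (mu_p \<alpha> p) ((tau_p p)\<^sup>2 + 1)) t" .
  qed
qed


lemma N_pos_q:
  assumes p: "p \<ge> 1" and a: "\<alpha> > 0"
  shows "measure (normal_measure (mu_p \<alpha> p) ((tau_p p)\<^sup>2 + 1)) {0<..} = \<alpha> / (\<alpha> + real p)"
proof -
  have p1: "real p \<ge> 1" using p by simp
  define q where "q = \<alpha> / (\<alpha> + real p)"
  have q: "0 < q" "q < 1" unfolding q_def using a p1 by (auto simp: field_simps)
  have "measure (normal_measure (mu_p \<alpha> p) ((tau_p p)\<^sup>2 + 1)) {0<..} = Phi (mu_p \<alpha> p / sqrt ((tau_p p)\<^sup>2 + 1))"
    by (rule normal_pos_prob) (simp add: add_nonneg_pos)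
  also have "mu_p \<alpha> p / sqrt ((tau_p p)\<^sup>2 + 1) = Phi_inv q"
  proof -
    have "sqrt ((tau_p p)\<^sup>2 + 1) > 0" by (simp add: add_nonneg_pos)
    then show ?thesis unfolding mu_p_def q_def by (simp add: add.commute)
  qed
  also have "Phi (Phi_inv q) = q" by (rule Phi_inv[OF q])
  finally show ?thesis unfolding q_def .
qed

lemma prob_Z_pos:
  assumes m: "mvp_ibp P p \<alpha> n S \<beta> \<epsilon>" and i: "i < n" and j: "j < p" and a: "\<alpha> > 0"
  shows "measure P {x\<in>space P. \<beta> j x + \<epsilon> i j x > 0} = \<alpha> / (\<alpha> + real p)"
proof -
  from m have P: "prob_space P" and mv: "mvn0 P p S (\<epsilon> i)"
    and bl: "\<And>j. j < p \<Longrightarrow> \<beta> j \<in> borel_measurable P"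
    unfolding mvp_ibp_def using i by auto
  have [measurable]: "\<beta> j \<in> borel_measurable P" using bl j by simp
  have [measurable]: "\<epsilon> i j \<in> borel_measurable P" using mv j unfolding mvn0_def by simp
  have "measure P {x\<in>space P. \<beta> j x + \<epsilon> i j x > 0} = measure (distr P borel (\<lambda>x. \<beta> j x + \<epsilon> i j x)) {0<..}"
    by (subst measure_distr) (auto intro!: arg_cong[where f="measure P"])
  also have "\<dots> = measure (normal_measure (mu_p \<alpha> p) ((tau_p p)\<^sup>2 + 1)) {0<..}"
    unfolding law_Z[OF m i j] ..
  also have "\<dots> = \<alpha> / (\<alpha> + real p)" by (rule N_pos_q) (use j a in auto)
  finally show ?thesis .
qed

lemma expect_nf:
  assumes m: "mvp_ibp P p \<alpha> n S \<beta> \<epsilon>" and i: "i < n" and a: "\<alpha> > 0"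
  shows "integral\<^sup>L P (num_features p \<beta> \<epsilon> i) = real p * \<alpha> / (\<alpha> + real p)"
proof -
  from m have P: "prob_space P" and mv: "mvn0 P p S (\<epsilon> i)"
    and bl: "\<And>j. j < p \<Longrightarrow> \<beta> j \<in> borel_measurable P"
    unfolding mvp_ibp_def using i by auto
  interpret P: prob_space P by fact
  have bm[measurable]: "\<beta> j \<in> borel_measurable P" if "j < p" for j using bl that by simp
  have em[measurable]: "\<epsilon> i j \<in> borel_measurable P" if "j < p" for j using mv that unfolding mvn0_def by simp
  have int: "integrable P (\<lambda>x. if \<beta> j x + \<epsilon> i j x > 0 then 1 else 0 :: real)" if "j < p" for j
    by (rule P.integrable_const_bound[where B=1]) (use that in auto)
  have "integral\<^sup>L P (num_features p \<beta> \<epsilon> i) = (\<Sum>j<p. (LINT x|P. (if \<beta> j x + \<epsilon> i j x > 0 then 1 else 0)))"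
    unfolding num_features_def by (rule Bochner_Integration.integral_sum) (use int in auto)
  also have "\<dots> = (\<Sum>j<p. \<alpha> / (\<alpha> + real p))"
  proof (rule sum.cong[OF refl])
    fix j assume j: "j \<in> {..<p}"
    have "(LINT x|P. (if \<beta> j x + \<epsilon> i j x > 0 then 1 else 0)) = (LINT x|P. indicator {x\<in>space P. \<beta> j x + \<epsilon> i j x > 0} x)"
      by (intro Bochner_Integration.integral_cong refl) (auto simp: indicator_def)
    also have "\<dots> = measure P {x\<in>space P. \<beta> j x + \<epsilon> i j x > 0}"
      by (simp add: Int_absorb2)
    also have "\<dots> = \<alpha> / (\<alpha> + real p)" using prob_Z_pos[OF m i _ a] j by simp
    finally show "(LINT x|P. (if \<beta> j x + \<epsilon> i j x > 0 then 1 else 0)) = \<alpha> / (\<alpha> + real p)" .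
  qed
  finally show ?thesis by simp
qed


lemma char_N_split:
  assumes "v \<ge> 0"
  shows "char (normal_measure m (v + 1)) t = char (normal_measure m v) t * complex_of_real (exp (- t\<^sup>2 / 2))"
  using assms
  by (simp add: char_normal_measure add_nonneg_pos algebra_simps exp_add[symmetric] diff_divide_distrib add_divide_distrib flip: exp_of_real)

lemma rect_Z:
  assumes m: "mvp_ibp P p \<alpha> n S \<beta> \<epsilon>" and i: "i < n"
    and Sid: "\<forall>j<p. \<forall>k<p. S j k = (if j = k then 1 else 0)"
    and B: "\<forall>j<p. B j \<in> sets borel"
  shows "measure P {x\<in>space P. \<forall>j<p. \<beta> j x + \<epsilon> i j x \<in> B j}
       = (\<Prod>j<p. measure (normal_measure (mu_p \<alpha> p) ((tau_p p)\<^sup>2 + 1)) (B j))"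
proof (rule indep_rect)
  from m have P: "prob_space P" and mv: "mvn0 P p S (\<epsilon> i)"
    and bl: "\<And>j. j < p \<Longrightarrow> \<beta> j \<in> borel_measurable P"
    unfolding mvp_ibp_def using i by auto
  have bm[measurable]: "\<beta> j \<in> borel_measurable P" if "j < p" for j using bl that by simp
  have em[measurable]: "\<epsilon> i j \<in> borel_measurable P" if "j < p" for j using mv that unfolding mvn0_def by simp
  show "prob_space P" by fact
  show "\<forall>j<p. (\<lambda>x. \<beta> j x + \<epsilon> i j x) \<in> borel_measurable P" by auto
  show "\<forall>j<p. real_distribution (normal_measure (mu_p \<alpha> p) ((tau_p p)\<^sup>2 + 1))"
    using real_distribution_normal_measure by simp
  show "\<forall>j<p. B j \<in> sets borel" by fact
  show "\<forall>c. (CLINT x|P. iexp (\<Sum>j<p. c j * (\<beta> j x + \<epsilon> i j x))) =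
      (\<Prod>j<p. char (normal_measure (mu_p \<alpha> p) ((tau_p p)\<^sup>2 + 1)) (c j))"
  proof
    fix c :: "nat \<Rightarrow> real"
    have ifz: "x * (if b then (1::real) else 0) * y = (if b then x * y else 0)" for b x y by simp
    have ss: "(\<Sum>j<p. \<Sum>k<p. c j * S j k * c k) = (\<Sum>j<p. c j ^ 2)"
    proof (rule sum.cong[OF refl])
      fix j assume j: "j \<in> {..<p}"
      have "(\<Sum>k<p. c j * S j k * c k) = (\<Sum>k<p. if j = k then c j * c k else 0)"
        using Sid j by (intro sum.cong refl) auto
      also have "\<dots> = c j ^ 2" using j by (simp add: power2_eq_square)
      finally show "(\<Sum>k<p. c j * S j k * c k) = c j ^ 2" .
    qed
    have "(CLINT x|P. iexp (\<Sum>j<p. c j * (\<beta> j x + \<epsilon> i j x)))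
        = (\<Prod>j<p. char (normal_measure (mu_p \<alpha> p) ((tau_p p)\<^sup>2)) (c j)) * complex_of_real (exp (- (\<Sum>j<p. c j ^ 2) / 2))"
      unfolding model_char[OF m i] ss ..
    also have "complex_of_real (exp (- (\<Sum>j<p. c j ^ 2) / 2)) = (\<Prod>j<p. complex_of_real (exp (- (c j)\<^sup>2 / 2)))"
    proof -
      have "- (\<Sum>j<p. c j ^ 2) / 2 = (\<Sum>j<p. - (c j)\<^sup>2 / 2)" by (simp add: sum_negf sum_divide_distrib)
      then have "exp (- (\<Sum>j<p. c j ^ 2) / 2) = (\<Prod>j<p. exp (- (c j)\<^sup>2 / 2))" by (simp add: exp_sum)
      then show ?thesis by simp
    qed
    also have "(\<Prod>j<p. char (normal_measure (mu_p \<alpha> p) ((tau_p p)\<^sup>2)) (c j)) * (\<Prod>j<p. complex_of_real (exp (- (c j)\<^sup>2 / 2)))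
        = (\<Prod>j<p. char (normal_measure (mu_p \<alpha> p) ((tau_p p)\<^sup>2 + 1)) (c j))"
      by (simp add: char_N_split prod.distrib)
    finally show "(CLINT x|P. iexp (\<Sum>j<p. c j * (\<beta> j x + \<epsilon> i j x))) =
      (\<Prod>j<p. char (normal_measure (mu_p \<alpha> p) ((tau_p p)\<^sup>2 + 1)) (c j))" .
  qed
qed

lemma count_T:
  assumes m: "mvp_ibp P p \<alpha> n S \<beta> \<epsilon>" and i: "i < n" and a: "\<alpha> > 0"
    and Sid: "\<forall>j<p. \<forall>k<p. S j k = (if j = k then 1 else 0)"
    and T: "T \<subseteq> {..<p}"
  shows "measure P {x\<in>space P. {j\<in>{..<p}. \<beta> j x + \<epsilon> i j x > 0} = T}
       = (\<alpha> / (\<alpha> + real p)) ^ card T * (1 - \<alpha> / (\<alpha> + real p)) ^ (p - card T)"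
proof -
  define N where "N = normal_measure (mu_p \<alpha> p) ((tau_p p)\<^sup>2 + 1)"
  define q where "q = \<alpha> / (\<alpha> + real p)"
  define B where "B j = (if j \<in> T then {0<..} else {..0::real})" for j
  interpret N: real_distribution N unfolding N_def by (rule real_distribution_normal_measure) simp
  have "{x\<in>space P. {j\<in>{..<p}. \<beta> j x + \<epsilon> i j x > 0} = T} = {x\<in>space P. \<forall>j<p. \<beta> j x + \<epsilon> i j x \<in> B j}"
    using T unfolding B_def by (auto simp: not_less)
  then have "measure P {x\<in>space P. {j\<in>{..<p}. \<beta> j x + \<epsilon> i j x > 0} = T} = (\<Prod>j<p. measure N (B j))"
    unfolding N_def by (simp add: rect_Z[OF m i Sid] B_def)
  also have "\<dots> = (\<Prod>j<p. if j \<in> T then q else 1 - q)"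
  proof (rule prod.cong[OF refl])
    fix j assume j: "j \<in> {..<p}"
    show "measure N (B j) = (if j \<in> T then q else 1 - q)"
    proof (cases "j \<in> T")
      case True
      then have "j < p" using T by auto
      then show ?thesis using True unfolding B_def N_def q_def
        by (simp add: N_pos_q a)
    next
      case False
      have "measure N {0<..} = q" unfolding N_def q_def using j by (intro N_pos_q a) auto
      then show ?thesis using False N.prob_compl[of "{0<..}"] unfolding B_def
        by (simp add: Compl_eq_Diff_UNIV[symmetric] not_less)
    qed
  qed
  also have "\<dots> = q ^ card T * (1 - q) ^ (p - card T)"
  proof -
    have "(\<Prod>j<p. if j \<in> T then q else 1 - q) = (\<Prod>j\<in>{..<p} \<inter> {j. j \<in> T}. q) * (\<Prod>j\<in>{..<p} \<inter> - {j. j \<in> T}. 1 - q)"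
      by (rule prod.If_cases) simp
    also have "{..<p} \<inter> {j. j \<in> T} = T" using T by auto
    also have "{..<p} \<inter> - {j. j \<in> T} = {..<p} - T" by auto
    also have "(\<Prod>j\<in>T. q) * (\<Prod>j\<in>{..<p} - T. 1 - q) = q ^ card T * (1 - q) ^ card ({..<p} - T)" by simp
    also have "card ({..<p} - T) = p - card T" using T by (simp add: card_Diff_subset finite_subset)
    finally show ?thesis .
  qed
  finally show ?thesis unfolding q_def .
qed


lemma cdf_nf:
  assumes m: "mvp_ibp P p \<alpha> n S \<beta> \<epsilon>" and i: "i < n" and a: "\<alpha> > 0"
    and Sid: "\<forall>j<p. \<forall>k<p. S j k = (if j = k then 1 else 0)"
  shows "measure P {x\<in>space P. num_features p \<beta> \<epsilon> i x \<le> y}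
       = (\<Sum>k\<in>{k. real k \<le> y}. real (p choose k) * (\<alpha> / (\<alpha> + real p)) ^ k * (1 - \<alpha> / (\<alpha> + real p)) ^ (p - k))"
proof -
  from m have P: "prob_space P" and mv: "mvn0 P p S (\<epsilon> i)"
    and bl: "\<And>j. j < p \<Longrightarrow> \<beta> j \<in> borel_measurable P"
    unfolding mvp_ibp_def using i by auto
  interpret P: prob_space P by fact
  have bm[measurable]: "\<beta> j \<in> borel_measurable P" if "j < p" for j using bl that by simp
  have em[measurable]: "\<epsilon> i j \<in> borel_measurable P" if "j < p" for j using mv that unfolding mvn0_def by simp
  define q where "q = \<alpha> / (\<alpha> + real p)"
  define Zs where "Zs x = {j\<in>{..<p}. \<beta> j x + \<epsilon> i j x > 0}" for x
  define ZT where "ZT T = {x\<in>space P. Zs x = T}" for T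
  define Tk where "Tk k = {T. T \<subseteq> {..<p} \<and> card T = k}" for k
  define Ck where "Ck k = {x\<in>space P. card (Zs x) = k}" for k
  have Zs_sub: "Zs x \<subseteq> {..<p}" for x unfolding Zs_def by auto
  have nf: "num_features p \<beta> \<epsilon> i x = real (card (Zs x))" for x
  proof -
    have "num_features p \<beta> \<epsilon> i x = (\<Sum>j\<in>{..<p} \<inter> {j. \<beta> j x + \<epsilon> i j x > 0}. 1) + (\<Sum>j\<in>{..<p} \<inter> - {j. \<beta> j x + \<epsilon> i j x > 0}. 0)"
      unfolding num_features_def by (rule sum.If_cases) simp
    also have "{..<p} \<inter> {j. \<beta> j x + \<epsilon> i j x > 0} = Zs x" unfolding Zs_def by auto
    finally show ?thesis by simp
  qed
  have ZT_sets: "ZT T \<in> sets P" if "T \<subseteq> {..<p}" for T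
  proof -
    have "ZT T = {x\<in>space P. \<forall>j<p. (j \<in> T \<longleftrightarrow> \<beta> j x + \<epsilon> i j x > 0)}"
      unfolding ZT_def Zs_def using that by auto
    also have "\<dots> \<in> sets P" by measurable
    finally show ?thesis .
  qed
  have finTk: "finite (Tk k)" for k unfolding Tk_def by (rule finite_subset[of _ "Pow {..<p}"]) auto
  have Ck_eq: "Ck k = (\<Union>T\<in>Tk k. ZT T)" for k
    unfolding Ck_def ZT_def Tk_def using Zs_sub by auto
  have Ck_sets: "Ck k \<in> sets P" for k
    unfolding Ck_eq using finTk ZT_sets by (auto simp: Tk_def)
  have Ck_meas: "measure P (Ck k) = real (p choose k) * q ^ k * (1 - q) ^ (p - k)" for k
  proof -
    have "measure P (Ck k) = (\<Sum>T\<in>Tk k. measure P (ZT T))"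
      unfolding Ck_eq
      by (rule P.finite_measure_finite_Union) (use finTk ZT_sets in \<open>auto simp: Tk_def disjoint_family_on_def ZT_def\<close>)
    also have "\<dots> = (\<Sum>T\<in>Tk k. q ^ k * (1 - q) ^ (p - k))"
    proof (rule sum.cong[OF refl])
      fix T assume T: "T \<in> Tk k"
      then have "T \<subseteq> {..<p}" "card T = k" unfolding Tk_def by auto
      then show "measure P (ZT T) = q ^ k * (1 - q) ^ (p - k)"
        unfolding ZT_def Zs_def q_def using count_T[OF m i a Sid, of T] by simp
    qed
    also have "\<dots> = real (card (Tk k)) * (q ^ k * (1 - q) ^ (p - k))" by simp
    also have "card (Tk k) = p choose k" unfolding Tk_def using n_subsets[of "{..<p}" k] by simp
    finally show ?thesis by simp
  qed
  define K where "K = {k::nat. real k \<le> y}"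
  have finK: "finite K"
  proof (rule finite_subset[of _ "{..nat \<lceil>y\<rceil>}"])
    show "K \<subseteq> {..nat \<lceil>y\<rceil>}" unfolding K_def by (auto simp: le_nat_iff) linarith
  qed simp
  have "{x\<in>space P. num_features p \<beta> \<epsilon> i x \<le> y} = (\<Union>k\<in>K. Ck k)"
    unfolding nf K_def Ck_def by auto
  then have "measure P {x\<in>space P. num_features p \<beta> \<epsilon> i x \<le> y} = (\<Sum>k\<in>K. measure P (Ck k))"
    by (simp, intro P.finite_measure_finite_Union) (use finK Ck_sets in \<open>auto simp: disjoint_family_on_def Ck_def\<close>)
  also have "\<dots> = (\<Sum>k\<in>K. real (p choose k) * q ^ k * (1 - q) ^ (p - k))" by (simp add: Ck_meas)
  finally show ?thesis unfolding K_def q_def .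
qed



lemma binom_poisson_lim:
  fixes a :: real assumes a: "a > 0"
  shows "(\<lambda>p::nat. real (p choose k) * (a / (a + real p)) ^ k * (real p / (a + real p)) ^ (p - k))
         \<longlonglongrightarrow> a ^ k / fact k * exp (- a)"
proof -
  define f where "f p = (1 / fact k) * (\<Prod>i<k. (real p - real i) * a / (a + real p))
      * (real p / (a + real p)) ^ p / (real p / (a + real p)) ^ k" for p :: nat
  have l1: "(\<lambda>p::nat. (real p / (a + real p)) ^ p) \<longlonglongrightarrow> exp (-a)"
    using a by real_asymp
  have l2: "(\<lambda>p::nat. (real p - real i) * a / (a + real p)) \<longlonglongrightarrow> a" for i
    using a by real_asymp
  have l3: "(\<lambda>p::nat. (real p / (a + real p)) ^ k) \<longlonglongrightarrow> 1"
    using a by real_asymp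
  have "(\<lambda>p. \<Prod>i<k. (real p - real i) * a / (a + real p)) \<longlonglongrightarrow> (\<Prod>i<k. a)"
    by (rule tendsto_prod) (rule l2)
  then have "f \<longlonglongrightarrow> (1 / fact k) * (\<Prod>i<k. a) * exp (-a) / 1"
    unfolding f_def by (intro tendsto_intros l1 l3) (auto intro: l2)
  then have lf: "f \<longlonglongrightarrow> a ^ k / fact k * exp (- a)" by simp
  have ev: "eventually (\<lambda>p. f p = real (p choose k) * (a / (a + real p)) ^ k * (real p / (a + real p)) ^ (p - k)) sequentially"
    using eventually_ge_at_top[of "Suc k"]
  proof eventually_elim
    case (elim p)
    then have pk: "k \<le> p" "p > 0" by auto
    have pos: "real p / (a + real p) > 0" using pk a by simp
    have bin: "real (p choose k) = (\<Prod>i<k. (real p - real i)) / fact k"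
      using gbinomial_mult_fact'[of "real p" k] by (simp add: binomial_gbinomial atLeast0LessThan field_simps)
    have pw: "(real p / (a + real p)) ^ p / (real p / (a + real p)) ^ k = (real p / (a + real p)) ^ (p - k)"
      by (rule power_diff[symmetric]) (use pos pk in auto)
    have "(\<Prod>i<k. (real p - real i) * a / (a + real p)) = (\<Prod>i<k. (real p - real i) * (a / (a + real p)))"
      by simp
    also have "\<dots> = (\<Prod>i<k. (real p - real i)) * (\<Prod>i<k. a / (a + real p))"
      by (rule prod.distrib)
    also have "\<dots> = (\<Prod>i<k. (real p - real i)) * (a / (a + real p)) ^ k"
      by simp
    finally have prodeq: "(\<Prod>i<k. (real p - real i) * a / (a + real p)) = (\<Prod>i<k. (real p - real i)) * (a / (a + real p)) ^ k" .
    define A where "A = (\<Prod>i<k. (real p - real i))"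
    define r where "r = real p / (a + real p)"
    define c where "c = a / (a + real p)"
    have "f p = (1 / fact k) * (A * c ^ k) * (r ^ p / r ^ k)"
      unfolding f_def prodeq A_def[symmetric] c_def[symmetric] r_def[symmetric] by simp
    also have "\<dots> = (A / fact k) * c ^ k * r ^ (p - k)"
      unfolding r_def pw by simp
    finally show ?case unfolding bin A_def[symmetric] c_def[symmetric] r_def[symmetric] .
  qed
  show ?thesis using Lim_transform_eventually[OF lf ev] .
qed

theorem theorem1:
  fixes \<alpha> :: real and n :: nat
    and M :: "nat \<Rightarrow> 'a measure"
    and S :: "nat \<Rightarrow> nat \<Rightarrow> nat \<Rightarrow> real"
    and \<beta> :: "nat \<Rightarrow> nat \<Rightarrow> 'a \<Rightarrow> real"
    and \<epsilon> :: "nat \<Rightarrow> nat \<Rightarrow> nat \<Rightarrow> 'a \<Rightarrow> real"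
  assumes "\<alpha> > 0"
    and "\<forall>p. mvp_ibp (M p) p \<alpha> n (S p) (\<beta> p) (\<epsilon> p)"
  shows "(\<forall>i<n. (\<lambda>p. integral\<^sup>L (M p) (num_features p (\<beta> p) (\<epsilon> p) i)) \<longlonglongrightarrow> \<alpha>) \<and>
         ((\<forall>p. \<forall>j<p. \<forall>k<p. S p j k = (if j = k then 1 else 0)) \<longrightarrow>
          (\<forall>i<n. weak_conv_m (\<lambda>p. distr (M p) borel (num_features p (\<beta> p) (\<epsilon> p) i))
                               (distr (measure_pmf (poisson_pmf \<alpha>)) borel real)))"
proof (intro conjI allI impI)
  note a = assms(1)
  have m: "mvp_ibp (M p) p \<alpha> n (S p) (\<beta> p) (\<epsilon> p)" for p using assms(2) by simp
  fix i assume i: "i < n"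
  have "(\<lambda>p. real p * \<alpha> / (\<alpha> + real p)) \<longlonglongrightarrow> \<alpha>"
    using a by real_asymp
  then show "(\<lambda>p. integral\<^sup>L (M p) (num_features p (\<beta> p) (\<epsilon> p) i)) \<longlonglongrightarrow> \<alpha>"
    using expect_nf[OF m i a] by simp
next
  note a = assms(1)
  have m: "mvp_ibp (M p) p \<alpha> n (S p) (\<beta> p) (\<epsilon> p)" for p using assms(2) by simp
  assume Sid: "\<forall>p. \<forall>j<p. \<forall>k<p. S p j k = (if j = k then 1 else 0)"
  fix i assume i: "i < n"
  show "weak_conv_m (\<lambda>p. distr (M p) borel (num_features p (\<beta> p) (\<epsilon> p) i))
                    (distr (measure_pmf (poisson_pmf \<alpha>)) borel real)"
    unfolding weak_conv_m_def weak_conv_def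
  proof (intro allI impI)
    fix y :: real
    define K where "K = {k::nat. real k \<le> y}"
    have finK: "finite K"
    proof (rule finite_subset[of _ "{..nat \<lceil>y\<rceil>}"])
      show "K \<subseteq> {..nat \<lceil>y\<rceil>}" unfolding K_def by (auto simp: le_nat_iff) linarith
    qed simp
    have nfm: "num_features p (\<beta> p) (\<epsilon> p) i \<in> borel_measurable (M p)" for p
    proof -
      from m[of p] have mv: "mvn0 (M p) p (S p) (\<epsilon> p i)"
        and bl: "\<And>j. j < p \<Longrightarrow> \<beta> p j \<in> borel_measurable (M p)"
        unfolding mvp_ibp_def using i by auto
      have bm[measurable]: "\<beta> p j \<in> borel_measurable (M p)" if "j < p" for j using bl that by simp
      have em[measurable]: "\<epsilon> p i j \<in> borel_measurable (M p)" if "j < p" for j using mv that unfolding mvn0_def by simp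
      show ?thesis unfolding num_features_def by measurable
    qed
    have lhs: "cdf (distr (M p) borel (num_features p (\<beta> p) (\<epsilon> p) i)) y
        = (\<Sum>k\<in>K. real (p choose k) * (\<alpha> / (\<alpha> + real p)) ^ k * (real p / (\<alpha> + real p)) ^ (p - k))" for p
    proof -
      have "cdf (distr (M p) borel (num_features p (\<beta> p) (\<epsilon> p) i)) y
          = measure (M p) {x\<in>space (M p). num_features p (\<beta> p) (\<epsilon> p) i x \<le> y}"
        unfolding cdf_def using nfm[of p] by (subst measure_distr) (auto intro!: arg_cong[where f="measure (M p)"])
      also have "\<dots> = (\<Sum>k\<in>K. real (p choose k) * (\<alpha> / (\<alpha> + real p)) ^ k * (1 - \<alpha> / (\<alpha> + real p)) ^ (p - k))"
        unfolding K_def using Sid by (intro cdf_nf[OF m i a]) auto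
      also have "1 - \<alpha> / (\<alpha> + real p) = real p / (\<alpha> + real p)"
        using a by (simp add: field_simps add_pos_nonneg)
      finally show ?thesis .
    qed
    have rhs: "cdf (distr (measure_pmf (poisson_pmf \<alpha>)) borel real) y = (\<Sum>k\<in>K. \<alpha> ^ k / fact k * exp (- \<alpha>))"
    proof -
      have "cdf (distr (measure_pmf (poisson_pmf \<alpha>)) borel real) y = measure (measure_pmf (poisson_pmf \<alpha>)) K"
        unfolding cdf_def K_def by (subst measure_distr) (auto simp: vimage_def)
      also have "\<dots> = (\<Sum>k\<in>K. pmf (poisson_pmf \<alpha>) k)" by (rule measure_measure_pmf_finite[OF finK])
      also have "\<dots> = (\<Sum>k\<in>K. \<alpha> ^ k / fact k * exp (- \<alpha>))" using pmf_poisson[OF a] by simp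
      finally show ?thesis .
    qed
    show "(\<lambda>p. cdf (distr (M p) borel (num_features p (\<beta> p) (\<epsilon> p) i)) y)
        \<longlonglongrightarrow> cdf (distr (measure_pmf (poisson_pmf \<alpha>)) borel real) y"
      unfolding lhs rhs by (intro tendsto_sum binom_poisson_lim a)
  qed
qed

end
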